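(* Assume $D=\sum_{k=1}^K N_k$ (i.e. $\sum_k N_k\le N_T$). Let $\mathcal G$ be a graph on $N_I$ vertices for which there exists a permutation matrix $\mathbf P$ with $\mathbf A_{\mathcal G}=\mathbf P\bar{\mathbf A}_{\mathcal G}\mathbf P^T$ and $\sum_{m=n+1}^{N_I}\bar{\mathbf A}_{\mathcal G}(n,m)=\min\{2L-1,N_I-n\}$ for $1\le n\le N_I-1$. Then $$\mathcal U_{\mathrm{fully}}=\mathcal U_{\mathcal G}\cup\mathcal N_{\mathcal U}.$$ Consequently $\mathcal H_{\mathrm{fully}}=\mathcal H_{\mathcal G}\cup\mathcal N$, where $\mathcal H_{\mathrm{fully}}=\{\mathbf H_d+\mathbf U^H\mathbf G:\mathbf U\in\mathcal U_{\mathrm{fully}}\}$, $\mathcal H_{\mathcal G}=\{\mathbf H_d+\mathbf U^H\mathbf G:\mathbf U\in\mathcal U_{\mathcal G}\}$ and $\mathcal N=\{\mathbf H_d+\mathbf U^H\mathbf G:\mathbf U\in\mathcal N_{\mathcal U}\}$.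
   Context: Let $N_I,N_T,K\ge1$, $N_1,\dots,N_K\ge1$ be integers, $Z_0>0$, and let $\mathbf H_{d,k}\in\mathbb C^{N_k\times N_T}$, $\mathbf H_{r,k}\in\mathbb C^{N_k\times N_I}$, $\mathbf G\in\mathbb C^{N_I\times N_T}$ be given. Let $\mathbf H_d$ and $\mathbf H_r\in\mathbb C^{(\sum_k N_k)\times N_I}$ be the vertical stackings of the $\mathbf H_{d,k}$ and of the $\mathbf H_{r,k}$, respectively. $D=\min\{\sum_k N_k,N_T\}$, $L=\min\{D,N_I/2\}$. A graph $\mathcal G=(\mathcal V,\mathcal E)$ is a simple undirected graph with vertices $V_1,\dots,V_{N_I}$; its adjacency matrix $\mathbf A_{\mathcal G}$ is the symmetric $0$–$1$ matrix with zero diagonal and $\mathbf A_{\mathcal G}(n,m)=1$ iff $(V_n,V_m)\in\mathcal E$; $\mathcal B_{\mathcal G}=\{\mathbf B\in\mathbb R^{N_I\times N_I}: B_{n,m}=0\ \forall n\ne m \text{ with }(V_n,V_m)\notin\mathcal E\}$. Define $\mathcal U_{\mathrm{fully}}=\{(\mathbf H_r\boldsymbol\Theta)^H : \boldsymbol\Theta=(\mathbf I+\mathsf iZ_0\mathbf B)^{-1}(\mathbf I-\mathsf iZ_0\mathbf B),\ \mathbf B\in\mathbb R^{N_I\times N_I},\ \mathbf B=\mathbf B^T\}$ and $\mathcal U_{\mathcal G}$ the same set with the additional constraint $\mathbf B\in\mathcal B_{\mathcal G}$. For $\mathbf U\in\mathbb C^{N_I\times\sum_k N_k}$ let $\mathbf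 M_{\mathbf U}=[\mathcal R(\mathsf iZ_0(\mathbf H_r^H+\mathbf U))\ \ \mathcal I(\mathsf iZ_0(\mathbf H_r^H+\mathbf U))]\in\mathbb R^{N_I\times 2\sum_k N_k}$, where $\mathcal R,\mathcal I$ denote entrywise real and imaginary parts, and let $\mathcal N_{\mathcal U}=\{\mathbf U\in\mathcal U_{\mathrm{fully}}:\ \mathbf M_{\mathbf U}\text{ has a singular } n\times n \text{ submatrix for some } n\le 2\sum_k N_k\}$. *)

theory Defs
  imports "Jordan_Normal_Form.Schur_Decomposition"
          "Jordan_Normal_Form.Gauss_Jordan_Elimination"
          "Jordan_Normal_Form.DL_Submatrix"
begin

text \<open>Matrices are Jordan_Normal_Form matrices; indices are 0-based
 (vertex V_n of the paper is index n-1).  The per-user channels H_{d,k}, H_{r,k}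
 enter only through their vertical stackings H_d, H_r, which are taken directly
 as matrices with sum_k N_k rows.\<close>

definition simple_graph :: "nat \<Rightarrow> (nat \<Rightarrow> nat \<Rightarrow> bool) \<Rightarrow> bool" where
  "simple_graph NI E \<longleftrightarrow> (\<forall>n<NI. \<forall>m<NI. E n m = E m n) \<and> (\<forall>n<NI. \<not> E n n)"

definition adj_mat :: "nat \<Rightarrow> (nat \<Rightarrow> nat \<Rightarrow> bool) \<Rightarrow> real mat" where
  "adj_mat NI E = mat NI NI (\<lambda>(n,m). if E n m then 1 else 0)"

definition perm_matrix :: "nat \<Rightarrow> real mat \<Rightarrow> bool" where
  "perm_matrix n P \<longleftrightarrow> (\<exists>p. p permutes {..<n} \<and> P = mat n n (\<lambda>(i,j). if p i = j then 1 else 0))"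

definition theta :: "real \<Rightarrow> real mat \<Rightarrow> complex mat" where
  "theta Z0 B = (let n = dim_row B; Bc = map_mat complex_of_real B in
     the (mat_inverse (1\<^sub>m n + (\<i> * complex_of_real Z0) \<cdot>\<^sub>m Bc)) *
     (1\<^sub>m n - (\<i> * complex_of_real Z0) \<cdot>\<^sub>m Bc))"

definition U_fully :: "complex mat \<Rightarrow> real \<Rightarrow> nat \<Rightarrow> complex mat set" where
  "U_fully Hr Z0 NI = {mat_adjoint (Hr * theta Z0 B) | B.
      B \<in> carrier_mat NI NI \<and> B = transpose_mat B}"

definition B_graph :: "nat \<Rightarrow> (nat \<Rightarrow> nat \<Rightarrow> bool) \<Rightarrow> real mat set" where
  "B_graph NI E = {B \<in> carrier_mat NI NI. \<forall>n<NI. \<forall>m<NI. n \<noteq> m \<and> \<not> E n m \<longrightarrow> B $$ (n,m) = 0}"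

definition U_graph :: "complex mat \<Rightarrow> real \<Rightarrow> nat \<Rightarrow> (nat \<Rightarrow> nat \<Rightarrow> bool) \<Rightarrow> complex mat set" where
  "U_graph Hr Z0 NI E = {mat_adjoint (Hr * theta Z0 B) | B.
      B \<in> carrier_mat NI NI \<and> B = transpose_mat B \<and> B \<in> B_graph NI E}"

definition M_U :: "complex mat \<Rightarrow> real \<Rightarrow> complex mat \<Rightarrow> real mat" where
  "M_U Hr Z0 U = (let X = (\<i> * complex_of_real Z0) \<cdot>\<^sub>m (mat_adjoint Hr + U);
                      NI = dim_col Hr; Nt = dim_row Hr in
     mat NI (2 * Nt) (\<lambda>(i,j). if j < Nt then Re (X $$ (i,j)) else Im (X $$ (i, j - Nt))))"

definition N_U :: "complex mat \<Rightarrow> real \<Rightarrow> nat \<Rightarrow> complex mat set" where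
  "N_U Hr Z0 NI = {U \<in> U_fully Hr Z0 NI. \<exists>n I J. 1 \<le> n \<and> n \<le> 2 * dim_row Hr \<and>
      I \<subseteq> {..<NI} \<and> J \<subseteq> {..<2 * dim_row Hr} \<and> card I = n \<and> card J = n \<and>
      det (submatrix (M_U Hr Z0 U) I J) = 0}"

definition H_set :: "complex mat \<Rightarrow> complex mat \<Rightarrow> complex mat set \<Rightarrow> complex mat set" where
  "H_set Hd G S = (\<lambda>U. Hd + mat_adjoint U * G) ` S"

definition L_val :: "nat \<Rightarrow> nat \<Rightarrow> nat list \<Rightarrow> real" where
  "L_val NI NT Ns = min (real (min (sum_list Ns) NT)) (real NI / 2)"

end

theory Submission
  imports Defs
begin
lemma bij_pick: assumes "finite I" shows "bij_betw (pick I) {..<card I} I"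
proof -
  have "inj_on (pick I) {..<card I}"
    proof (rule inj_onI)
    fix x y assume x: "x \<in> {..<card I}" and y: "y \<in> {..<card I}" and e: "pick I x = pick I y"
    show "x = y"
    proof (rule ccontr)
      assume "x \<noteq> y"
      hence "x < y \<or> y < x" by auto
      moreover have "x < y \<Longrightarrow> pick I x < pick I y" using pick_mono[of y I x] y by simp
      moreover have "y < x \<Longrightarrow> pick I y < pick I x" using pick_mono[of x I y] x by simp
      ultimately show False using e by auto
    qed
  qed
  moreover have "pick I ` {..<card I} = I"
  proof
    show "pick I ` {..<card I} \<subseteq> I"
    proof
      fix z assume "z \<in> pick I ` {..<card I}"
      then obtain k where k: "k < card I" "z = pick I k" by auto
      show "z \<in> I" using pick_in_set[of k I] k by simp
    qed
    show "I \<subseteq> pick I ` {..<card I}"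
    proof
      fix i assume i: "i \<in> I"
      have "{a\<in>I. a < i} \<subset> I" using i by auto
      hence "card {a\<in>I. a < i} < card I" using assms psubset_card_mono by blast
      thus "i \<in> pick I ` {..<card I}" using pick_card_in_set[OF i] by force
    qed
  qed
  ultimately show ?thesis unfolding bij_betw_def by auto
qed

lemma sum_pick: assumes "finite I" shows "(\<Sum>k<card I. f (pick I k)) = (\<Sum>i\<in>I. f i)"
  using sum.reindex_bij_betw[OF bij_pick[OF assms], of f] by simp

lemma minor_facts:
  fixes M :: "real mat"
  assumes I: "I \<subseteq> {..<dim_row M}" and J: "J \<subseteq> {..<dim_col M}" and cd: "card J = card I"
    and dt: "det (submatrix M I J) \<noteq> 0"
  shows "\<And>l. (\<forall>\<beta>\<in>J. (\<Sum>i\<in>I. l i * M$$(i,\<beta>)) = 0) \<Longrightarrow> \<forall>i\<in>I. l i = 0"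
    and "\<And>r. \<exists>l. \<forall>\<beta>\<in>J. (\<Sum>i\<in>I. l i * M$$(i,\<beta>)) = r \<beta>"
proof -
  define n where "n = card I"
  have fI: "finite I" using I finite_subset by blast
  have fJ: "finite J" using J finite_subset by blast
  have cI: "{i. i<dim_row M \<and> i\<in>I} = I" using I by auto
  have cJ: "{i. i<dim_col M \<and> i\<in>J} = J" using J by auto
  define A where "A = submatrix M I J"
  have A: "A \<in> carrier_mat n n" unfolding A_def carrier_mat_def n_def using dim_submatrix[of M I J] cI cJ cd by simp
  have Aix: "A $$ (k,b) = M $$ (pick I k, pick J b)" if "k < n" "b < n" for k b
  proof -
    from that have "k < card {i. i<dim_row M \<and> i\<in>I}" "b < card {j. j<dim_col M \<and> j\<in>J}"
      unfolding cI cJ n_def cd by auto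
    thus ?thesis unfolding A_def by (rule submatrix_index)
  qed
  define AT where "AT = transpose_mat A"
  have AT: "AT \<in> carrier_mat n n" using A unfolding AT_def by auto
  have dAT: "det AT \<noteq> 0" using det_transpose[OF A] dt unfolding AT_def A_def by simp
  have ATv: "(AT *\<^sub>v v) $ b = (\<Sum>k<n. v $ k * M $$ (pick I k, pick J b))"
    if "b < n" "v \<in> carrier_vec n" for b v
  proof -
    have "(AT *\<^sub>v v) $ b = row AT b \<bullet> v" using AT that by simp
    also have "\<dots> = (\<Sum>k<n. AT $$ (b,k) * v $ k)"
      unfolding scalar_prod_def using AT that by (auto intro!: sum.cong simp: atLeast0LessThan)
    also have "\<dots> = (\<Sum>k<n. v $ k * M $$ (pick I k, pick J b))"
      using A that Aix unfolding AT_def by (auto intro!: sum.cong)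
    finally show ?thesis .
  qed
  have pickJ: "pick J b \<in> J" if "b < n" for b using pick_in_set[of b J] that cd n_def by simp
  have pickI_card: "card {a\<in>I. a < pick I k} = k" if "k < n" for k
    using card_pick[of k I] that n_def by simp
  have cardlt: "card {a\<in>I. a < i} < n" if "i \<in> I" for i
  proof -
    have "{a\<in>I. a < i} \<subset> I" using that by auto
    thus ?thesis using fI psubset_card_mono n_def by blast
  qed
  have cardltJ: "card {a\<in>J. a < i} < n" if "i \<in> J" for i
  proof -
    have "{a\<in>J. a < i} \<subset> J" using that by auto
    thus ?thesis using fJ psubset_card_mono n_def cd by metis
  qed
  show "\<forall>i\<in>I. l i = 0" if hyp: "\<forall>\<beta>\<in>J. (\<Sum>i\<in>I. l i * M$$(i,\<beta>)) = 0" for l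
  proof -
    define v where "v = vec n (\<lambda>k. l (pick I k))"
    have v: "v \<in> carrier_vec n" unfolding v_def by simp
    have "AT *\<^sub>v v = 0\<^sub>v n"
    proof (rule eq_vecI)
      show "dim_vec (AT *\<^sub>v v) = dim_vec (0\<^sub>v n)" using AT by simp
      fix b assume "b < dim_vec (0\<^sub>v n)"
      hence b: "b < n" by simp
      have "(AT *\<^sub>v v) $ b = (\<Sum>k<n. l (pick I k) * M $$ (pick I k, pick J b))"
        using ATv[OF b v] unfolding v_def by simp
      also have "\<dots> = (\<Sum>i\<in>I. l i * M $$ (i, pick J b))"
        using sum_pick[OF fI, of "\<lambda>i. l i * M $$ (i, pick J b)"] n_def by simp
      also have "\<dots> = 0" using hyp pickJ[OF b] by blast
      finally show "(AT *\<^sub>v v) $ b = 0\<^sub>v n $ b" using b by simp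
    qed
    hence v0: "v = 0\<^sub>v n" using det_0_iff_vec_prod_zero_field[OF AT] dAT v by blast
    show ?thesis
    proof
      fix i assume i: "i \<in> I"
      have "v $ (card {a\<in>I. a < i}) = l i" unfolding v_def using cardlt[OF i] pick_card_in_set[OF i] by simp
      thus "l i = 0" using v0 cardlt[OF i] by simp
    qed
  qed
  show "\<exists>l. \<forall>\<beta>\<in>J. (\<Sum>i\<in>I. l i * M$$(i,\<beta>)) = r \<beta>" for r
  proof -
    have "AT \<in> Units (ring_mat TYPE(real) n ())" using det_non_zero_imp_unit[OF AT dAT] .
    then obtain Bi where Bi: "Bi \<in> carrier_mat n n" and ABi: "AT * Bi = 1\<^sub>m n"
      unfolding Units_def ring_mat_def by auto
    define r' where "r' = vec n (\<lambda>b. r (pick J b))"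
    define v where "v = Bi *\<^sub>v r'"
    have r': "r' \<in> carrier_vec n" unfolding r'_def by (rule vec_carrier)
    have v: "v \<in> carrier_vec n" unfolding v_def using Bi r' by (rule mult_mat_vec_carrier)
    have "AT *\<^sub>v v = (AT * Bi) *\<^sub>v r'" unfolding v_def using assoc_mult_mat_vec[OF AT Bi r'] by (rule sym)
    also have "\<dots> = r'" unfolding ABi using r' by (rule one_mult_mat_vec)
    finally have ATvr: "AT *\<^sub>v v = r'" .
    define l where "l i = v $ (card {a\<in>I. a < i})" for i
    show ?thesis
    proof (rule exI[of _ l], intro ballI)
      fix \<beta> assume \<beta>: "\<beta> \<in> J"
      define b where "b = card {a\<in>J. a < \<beta>}"
      have b: "b < n" using cardltJ[OF \<beta>] b_def by simp
      have pb: "pick J b = \<beta>" using pick_card_in_set[OF \<beta>] b_def by simp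
      have "(\<Sum>i\<in>I. l i * M$$(i,\<beta>)) = (\<Sum>k<n. l (pick I k) * M $$ (pick I k, \<beta>))"
        using sum_pick[OF fI, of "\<lambda>i. l i * M $$ (i, \<beta>)"] n_def by simp
      also have "\<dots> = (\<Sum>k<n. v $ k * M $$ (pick I k, pick J b))"
        unfolding l_def pb using pickI_card by (auto intro!: sum.cong)
      also have "\<dots> = (AT *\<^sub>v v) $ b" using ATv[OF b v] by simp
      also have "\<dots> = r \<beta>" using ATvr b pb unfolding r'_def by simp
      finally show "(\<Sum>i\<in>I. l i * M$$(i,\<beta>)) = r \<beta>" .
    qed
  qed
qed

lemma tail_solve:
  fixes M :: "real mat" and Q :: "nat \<Rightarrow> nat \<Rightarrow> real"
  assumes T: "T \<subseteq> {..<dim_row M}" and C: "C \<le> dim_col M" "C \<ge> 1" and cT: "card T = C - 1"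
    and dt: "det (submatrix M T {..<C-1}) \<noteq> 0"
    and symQ: "\<And>\<alpha> \<beta>. \<alpha> < C \<Longrightarrow> \<beta> < C \<Longrightarrow>
        (\<Sum>t\<in>T. M$$(t,\<alpha>) * Q t \<beta>) = (\<Sum>t\<in>T. M$$(t,\<beta>) * Q t \<alpha>)"
  shows "\<exists>St. (\<forall>i j. St i j = St j i) \<and> (\<forall>t\<in>T. \<forall>\<beta><C. (\<Sum>s\<in>T. St t s * M$$(s,\<beta>)) = Q t \<beta>)"
proof -
  let ?J = "{..<C-1}"
  have J: "?J \<subseteq> {..<dim_col M}" using C by auto
  have cJ: "card ?J = card T" using cT by simp
  note F = minor_facts[OF T J cJ dt]
  have fT: "finite T" using T finite_subset by blast
  define S0 where "S0 t = (SOME l. \<forall>\<beta>\<in>?J. (\<Sum>s\<in>T. l s * M$$(s,\<beta>)) = Q t \<beta>)" for t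
  have S0: "(\<Sum>s\<in>T. S0 t s * M$$(s,\<beta>)) = Q t \<beta>" if "\<beta> < C - 1" for t \<beta>
  proof -
    have "\<exists>l. \<forall>\<beta>\<in>?J. (\<Sum>s\<in>T. l s * M$$(s,\<beta>)) = Q t \<beta>" using F(2) by blast
    from someI_ex[OF this] show ?thesis using that unfolding S0_def by auto
  qed
  have sym: "S0 t s = S0 s t" if t: "t \<in> T" and s: "s \<in> T" for t s
  proof -
    define D where "D t s = S0 t s - S0 s t" for t s
    have step1: "(\<Sum>s\<in>T. (\<Sum>t\<in>T. M$$(t,\<alpha>) * D t s) * M$$(s,\<gamma>)) = 0"
      if \<alpha>: "\<alpha> < C - 1" and \<gamma>: "\<gamma> < C - 1" for \<alpha> \<gamma>
    proof -
      have e1: "(\<Sum>s\<in>T. (\<Sum>t\<in>T. M$$(t,\<alpha>) * S0 t s) * M$$(s,\<gamma>)) = (\<Sum>t\<in>T. M$$(t,\<alpha>) * Q t \<gamma>)"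
      proof -
        have "(\<Sum>s\<in>T. (\<Sum>t\<in>T. M$$(t,\<alpha>) * S0 t s) * M$$(s,\<gamma>))
            = (\<Sum>s\<in>T. \<Sum>t\<in>T. M$$(t,\<alpha>) * (S0 t s * M$$(s,\<gamma>)))"
          by (simp add: sum_distrib_right mult.assoc)
        also have "\<dots> = (\<Sum>t\<in>T. \<Sum>s\<in>T. M$$(t,\<alpha>) * (S0 t s * M$$(s,\<gamma>)))" by (rule sum.swap)
        also have "\<dots> = (\<Sum>t\<in>T. M$$(t,\<alpha>) * Q t \<gamma>)"
          by (simp add: sum_distrib_left[symmetric] S0[OF \<gamma>])
        finally show ?thesis .
      qed
      have e2: "(\<Sum>s\<in>T. (\<Sum>t\<in>T. M$$(t,\<alpha>) * S0 s t) * M$$(s,\<gamma>)) = (\<Sum>s\<in>T. M$$(s,\<gamma>) * Q s \<alpha>)"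
      proof -
        have "(\<Sum>s\<in>T. (\<Sum>t\<in>T. M$$(t,\<alpha>) * S0 s t) * M$$(s,\<gamma>))
            = (\<Sum>s\<in>T. M$$(s,\<gamma>) * (\<Sum>t\<in>T. S0 s t * M$$(t,\<alpha>)))"
          by (simp add: sum_distrib_right sum_distrib_left mult.commute mult.left_commute)
        also have "\<dots> = (\<Sum>s\<in>T. M$$(s,\<gamma>) * Q s \<alpha>)" by (simp add: S0[OF \<alpha>])
        finally show ?thesis .
      qed
      have "(\<Sum>s\<in>T. (\<Sum>t\<in>T. M$$(t,\<alpha>) * D t s) * M$$(s,\<gamma>))
          = (\<Sum>s\<in>T. (\<Sum>t\<in>T. M$$(t,\<alpha>) * S0 t s) * M$$(s,\<gamma>))
            - (\<Sum>s\<in>T. (\<Sum>t\<in>T. M$$(t,\<alpha>) * S0 s t) * M$$(s,\<gamma>))"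
        unfolding D_def by (simp add: right_diff_distrib left_diff_distrib sum_subtractf)
      also have "\<dots> = 0" unfolding e1 e2 using symQ[of \<alpha> \<gamma>] \<alpha> \<gamma> by simp
      finally show ?thesis .
    qed
    have step2: "(\<Sum>t\<in>T. M$$(t,\<alpha>) * D t s) = 0" if "s \<in> T" "\<alpha> < C - 1" for \<alpha> s
      using F(1)[of "\<lambda>s. \<Sum>t\<in>T. M$$(t,\<alpha>) * D t s"] step1[OF that(2)] that(1) by auto
    have "(\<Sum>t\<in>T. D t s * M$$(t,\<alpha>)) = 0" if "\<alpha> < C - 1" for \<alpha>
      using step2[OF s that] by (simp add: mult.commute)
    hence "D t s = 0" using F(1)[of "\<lambda>t. D t s"] t by auto
    thus ?thesis unfolding D_def by simp
  qed
  define St where "St i j = (if i \<in> T \<and> j \<in> T then S0 i j else 0)" for i j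
  have Stsym: "\<forall>i j. St i j = St j i" unfolding St_def using sym by auto
  have St0: "(\<Sum>s\<in>T. St t s * M$$(s,\<beta>)) = (\<Sum>s\<in>T. S0 t s * M$$(s,\<beta>))" if "t \<in> T" for t \<beta>
    unfolding St_def using that by (auto intro!: sum.cong)
  have last: "(\<Sum>s\<in>T. S0 t s * M$$(s,C-1)) = Q t (C-1)" if t: "t \<in> T" for t
  proof -
    define w where "w t = (\<Sum>s\<in>T. S0 t s * M$$(s,C-1)) - Q t (C-1)" for t
    have "(\<Sum>t\<in>T. w t * M$$(t,\<alpha>)) = 0" if \<alpha>: "\<alpha> < C - 1" for \<alpha>
    proof -
      have "(\<Sum>t\<in>T. (\<Sum>s\<in>T. S0 t s * M$$(s,C-1)) * M$$(t,\<alpha>))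
          = (\<Sum>t\<in>T. \<Sum>s\<in>T. M$$(s,C-1) * (S0 s t * M$$(t,\<alpha>)))"
      proof -
        have "(\<Sum>t\<in>T. (\<Sum>s\<in>T. S0 t s * M$$(s,C-1)) * M$$(t,\<alpha>))
          = (\<Sum>t\<in>T. \<Sum>s\<in>T. M$$(s,C-1) * (S0 t s * M$$(t,\<alpha>)))"
          by (simp add: sum_distrib_right sum_distrib_left mult_ac)
        also have "\<dots> = (\<Sum>t\<in>T. \<Sum>s\<in>T. M$$(s,C-1) * (S0 s t * M$$(t,\<alpha>)))"
          using sym by (intro sum.cong refl) simp
        finally show ?thesis .
      qed
      also have "\<dots> = (\<Sum>s\<in>T. \<Sum>t\<in>T. M$$(s,C-1) * (S0 s t * M$$(t,\<alpha>)))" by (rule sum.swap)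
      also have "\<dots> = (\<Sum>s\<in>T. M$$(s,C-1) * Q s \<alpha>)"
        by (simp add: sum_distrib_left[symmetric] S0[OF \<alpha>])
      also have "\<dots> = (\<Sum>t\<in>T. M$$(t,\<alpha>) * Q t (C-1))" using symQ[of "C-1" \<alpha>] \<alpha> C by simp
      finally have "(\<Sum>t\<in>T. (\<Sum>s\<in>T. S0 t s * M$$(s,C-1)) * M$$(t,\<alpha>)) = (\<Sum>t\<in>T. Q t (C-1) * M$$(t,\<alpha>))"
        by (simp add: mult.commute)
      thus ?thesis unfolding w_def by (simp add: left_diff_distrib sum_subtractf)
    qed
    hence "w t = 0" using F(1)[of w] t by auto
    thus ?thesis unfolding w_def by simp
  qed
  show ?thesis
  proof (intro exI conjI)
    show "\<forall>i j. St i j = St j i" by (rule Stsym)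
    show "\<forall>t\<in>T. \<forall>\<beta><C. (\<Sum>s\<in>T. St t s * M$$(s,\<beta>)) = Q t \<beta>"
    proof (intro ballI allI impI)
      fix t \<beta> assume t: "t \<in> T" and b: "\<beta> < C"
      show "(\<Sum>s\<in>T. St t s * M$$(s,\<beta>)) = Q t \<beta>"
      proof (cases "\<beta> < C - 1")
        case True thus ?thesis using St0[OF t] S0 by simp
      next
        case False hence "\<beta> = C - 1" using b by simp
        thus ?thesis using St0[OF t] last[OF t] by simp
      qed
    qed
  qed
qed

lemma double_sum_sym:
  fixes m :: "nat \<Rightarrow> nat \<Rightarrow> real"
  assumes "\<forall>i\<in>A. \<forall>j\<in>A. B i j = B j i"
  shows "(\<Sum>i\<in>A. \<Sum>j\<in>A. m i \<alpha> * B i j * m j \<beta>) = (\<Sum>i\<in>A. \<Sum>j\<in>A. m i \<beta> * B i j * m j \<alpha>)"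
proof -
  have "(\<Sum>i\<in>A. \<Sum>j\<in>A. m i \<alpha> * B i j * m j \<beta>) = (\<Sum>j\<in>A. \<Sum>i\<in>A. m i \<alpha> * B i j * m j \<beta>)"
    by (rule sum.swap)
  also have "\<dots> = (\<Sum>j\<in>A. \<Sum>i\<in>A. m j \<beta> * B j i * m i \<alpha>)"
    using assms by (intro sum.cong refl) (simp add: mult_ac)
  finally show ?thesis .
qed

lemma symQ_lemma:
  fixes m :: "nat \<Rightarrow> nat \<Rightarrow> real"
  assumes fin: "finite P" "finite T" and disj: "P \<inter> T = {}"
    and Bs: "\<forall>i\<in>P \<union> T. \<forall>j\<in>P \<union> T. B i j = B j i"
    and B0s: "\<forall>i\<in>P \<union> T. \<forall>j\<in>P \<union> T. B0 i j = B0 j i"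
    and R0: "\<And>i \<gamma>. i \<in> P \<union> T \<Longrightarrow> \<gamma> \<in> {\<alpha>,\<beta>} \<Longrightarrow> R i \<gamma> = (\<Sum>j\<in>P \<union> T. B0 i j * m j \<gamma>)"
    and RP: "\<And>i \<gamma>. i \<in> P \<Longrightarrow> \<gamma> \<in> {\<alpha>,\<beta>} \<Longrightarrow> R i \<gamma> = (\<Sum>j\<in>P \<union> T. B i j * m j \<gamma>)"
  shows "(\<Sum>t\<in>T. m t \<alpha> * (R t \<beta> - (\<Sum>j\<in>P. B t j * m j \<beta>)))
       = (\<Sum>t\<in>T. m t \<beta> * (R t \<alpha> - (\<Sum>j\<in>P. B t j * m j \<alpha>)))"
proof -
  let ?U = "P \<union> T"
  define F where "F a b = (\<Sum>i\<in>?U. \<Sum>j\<in>?U. m i a * B0 i j * m j b)" for a b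
  define G where "G a b = (\<Sum>i\<in>P. \<Sum>j\<in>P. m i a * B i j * m j b)" for a b
  define H where "H a b = (\<Sum>i\<in>P. \<Sum>j\<in>T. m i a * B i j * m j b)" for a b
  define H' where "H' a b = (\<Sum>t\<in>T. \<Sum>j\<in>P. m t a * B t j * m j b)" for a b
  have Fs: "F a b = F b a" for a b unfolding F_def by (rule double_sum_sym[OF B0s])
  have Gs: "G a b = G b a" for a b unfolding G_def by (rule double_sum_sym) (use Bs in auto)
  have HH: "H b a = H' a b" for a b
  proof -
    have "H b a = (\<Sum>j\<in>T. \<Sum>i\<in>P. m i b * B i j * m j a)" unfolding H_def by (rule sum.swap)
    also have "\<dots> = H' a b" unfolding H'_def using Bs by (intro sum.cong refl) (simp add: mult_ac)
    finally show ?thesis .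
  qed
  have key: "(\<Sum>t\<in>T. m t a * (R t b - (\<Sum>j\<in>P. B t j * m j b))) = F a b - G a b - H a b - H' a b" if ab: "b \<in> {\<alpha>,\<beta>}" for a b
  proof -
    have RU: "(\<Sum>i\<in>?U. m i a * R i b) = F a b"
      unfolding F_def using R0 ab by (intro sum.cong refl) (simp add: sum_distrib_left mult_ac)
    have RPs: "(\<Sum>i\<in>P. m i a * R i b) = G a b + H a b"
    proof -
      have "(\<Sum>i\<in>P. m i a * R i b) = (\<Sum>i\<in>P. (\<Sum>j\<in>P. m i a * B i j * m j b) + (\<Sum>j\<in>T. m i a * B i j * m j b))"
      proof (rule sum.cong[OF refl])
        fix i assume i: "i \<in> P"
        have "m i a * R i b = (\<Sum>j\<in>?U. m i a * B i j * m j b)"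
          using RP[OF i ab] by (simp add: sum_distrib_left mult_ac)
        also have "\<dots> = (\<Sum>j\<in>P. m i a * B i j * m j b) + (\<Sum>j\<in>T. m i a * B i j * m j b)"
          by (rule sum.union_disjoint[OF fin disj])
        finally show "m i a * R i b = (\<Sum>j\<in>P. m i a * B i j * m j b) + (\<Sum>j\<in>T. m i a * B i j * m j b)" .
      qed
      thus ?thesis unfolding G_def H_def by (simp add: sum.distrib)
    qed
    have "(\<Sum>i\<in>?U. m i a * R i b) = (\<Sum>i\<in>P. m i a * R i b) + (\<Sum>i\<in>T. m i a * R i b)"
      by (rule sum.union_disjoint[OF fin disj])
    hence TR: "(\<Sum>i\<in>T. m i a * R i b) = F a b - G a b - H a b" using RU RPs by simp
    have "(\<Sum>t\<in>T. m t a * (R t b - (\<Sum>j\<in>P. B t j * m j b)))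
        = (\<Sum>t\<in>T. m t a * R t b) - (\<Sum>t\<in>T. \<Sum>j\<in>P. m t a * B t j * m j b)"
      by (simp add: right_diff_distrib sum_subtractf sum_distrib_left mult_ac)
    thus ?thesis using TR unfolding H'_def by simp
  qed
  show ?thesis using key[of \<beta> \<alpha>] key[of \<alpha> \<beta>] Fs[of \<alpha> \<beta>] Gs[of \<alpha> \<beta>] HH[of \<alpha> \<beta>] HH[of \<beta> \<alpha>] by simp
qed

lemma core:
  fixes M :: "real mat" and R B0 :: "nat \<Rightarrow> nat \<Rightarrow> real" and E :: "nat \<Rightarrow> nat \<Rightarrow> bool" and q :: "nat \<Rightarrow> nat"
  assumes dM: "dim_row M = N" "dim_col M = c" and c2: "c \<ge> 2" and cN: "c < N"
    and q: "bij_betw q {..<N} {..<N}"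
    and Es: "\<forall>i<N. \<forall>j<N. E i j = E j i"
    and H1: "\<forall>a. a \<le> N - c \<longrightarrow> card {b. a < b \<and> b < N \<and> E (q a) (q b)} = c - 1"
    and H2: "\<forall>a b. N - c < a \<longrightarrow> a < b \<longrightarrow> b < N \<longrightarrow> E (q a) (q b)"
    and nons: "\<forall>I J. I \<subseteq> {..<N} \<longrightarrow> J \<subseteq> {..<c} \<longrightarrow> card I = card J \<longrightarrow> 1 \<le> card I \<longrightarrow>
                 det (submatrix M I J) \<noteq> 0"
    and B0s: "\<forall>i<N. \<forall>j<N. B0 i j = B0 j i"
    and R: "\<forall>i<N. \<forall>\<beta><c. R i \<beta> = (\<Sum>j<N. B0 i j * M$$(j,\<beta>))"
  shows "\<exists>B'. (\<forall>i j. B' i j = B' j i) \<and> (\<forall>i<N. \<forall>j<N. i \<noteq> j \<and> \<not> E i j \<longrightarrow> B' i j = 0)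
           \<and> (\<forall>i<N. \<forall>\<beta><c. (\<Sum>j<N. B' i j * M$$(j,\<beta>)) = R i \<beta>)"
proof -
  have qinj: "inj_on q {..<N}" using q by (rule bij_betw_imp_inj_on)
  have qim: "q ` {..<N} = {..<N}" using q by (rule bij_betw_imp_surj_on)
  have qlt: "q a < N" if "a < N" for a using qim that by blast
  have qeq: "a = b" if "q a = q b" "a < N" "b < N" for a b using inj_onD[OF qinj that(1)] that(2,3) by simp
  have Jc: "{..<c} \<subseteq> {..<dim_col M}" unfolding dM(2) by (rule order_refl)
  have inv: "\<exists>B'. (\<forall>i j. B' i j = B' j i) \<and> (\<forall>a<k. \<forall>j<N. j \<noteq> q a \<and> \<not> E (q a) j \<longrightarrow> B' (q a) j = 0)
      \<and> (\<forall>a<k. \<forall>\<beta><c. (\<Sum>j<N. B' (q a) j * M$$(j,\<beta>)) = R (q a) \<beta>)" if "k \<le> N - c + 1" for k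
    using that
  proof (induction k)
    case 0 show ?case by (rule exI[of _ "\<lambda>_ _. 0"]) simp
  next
    case (Suc k)
    then obtain B' where Bs: "\<forall>i j. B' i j = B' j i"
      and Bp: "\<forall>a<k. \<forall>j<N. j \<noteq> q a \<and> \<not> E (q a) j \<longrightarrow> B' (q a) j = 0"
      and Be: "\<forall>a<k. \<forall>\<beta><c. (\<Sum>j<N. B' (q a) j * M$$(j,\<beta>)) = R (q a) \<beta>" by auto
    have kN: "k < N" and kc: "k \<le> N - c" using Suc.prems cN c2 by auto
    define v where "v = q k"
    have vN: "v < N" unfolding v_def using qlt kN .
    define Bu where "Bu = {b. k < b \<and> b < N \<and> E v (q b)}"
    define Up where "Up = q ` Bu"
    define S where "S = insert v Up"
    define P where "P = q ` {..<k}"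
    have BuN: "Bu \<subseteq> {..<N}" unfolding Bu_def by auto
    have cBu: "card Bu = c - 1" using H1 kc unfolding Bu_def v_def by auto
    have cUp: "card Up = c - 1" unfolding Up_def using card_image[OF inj_on_subset[OF qinj BuN]] cBu by simp
    have vUp: "v \<notin> Up"
    proof
      assume "v \<in> Up"
      then obtain b where "b \<in> Bu" "q b = q k" unfolding Up_def v_def by auto
      thus False using qeq[of b k] kN unfolding Bu_def by auto
    qed
    have fUp: "finite Up" unfolding Up_def Bu_def by simp
    have cS: "card S = c" unfolding S_def using vUp fUp cUp c2 by simp
    have SN: "S \<subseteq> {..<N}" unfolding S_def Up_def using vN BuN qlt by auto
    have PN: "P \<subseteq> {..<N}" unfolding P_def using qlt kN by auto
    have PS: "P \<inter> S = {}"
    proof (rule ccontr)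
      assume "P \<inter> S \<noteq> {}"
      then obtain a j where a: "a < k" "q a = j" "j \<in> S" unfolding P_def by auto
      show False
      proof (cases "j = v")
        case True thus False using qeq[of a k] a kN unfolding v_def by auto
      next
        case False
        then obtain b where "b \<in> Bu" "q b = j" using a unfolding S_def Up_def by auto
        thus False using qeq[of a b] a kN unfolding Bu_def by auto
      qed
    qed
    have fS: "finite S" and fP: "finite P" using SN PN finite_subset by auto
    have dS: "det (submatrix M S {..<c}) \<noteq> 0" using nons SN cS c2 by auto
    have SM: "S \<subseteq> {..<dim_row M}" using SN dM by simp
    obtain l where l: "\<forall>\<beta>\<in>{..<c}. (\<Sum>j\<in>S. l j * M$$(j,\<beta>)) = R v \<beta> - (\<Sum>j\<in>P. B' v j * M$$(j,\<beta>))"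
      using minor_facts(2)[OF SM Jc _ dS, of "\<lambda>\<beta>. R v \<beta> - (\<Sum>j\<in>P. B' v j * M$$(j,\<beta>))"] cS by auto
    define row where "row j = (if j \<in> S then l j else if j \<in> P then B' v j else 0)" for j
    define B'' where "B'' i j = (if i = v then row j else if j = v then row i else B' i j)" for i j
    have B''s: "\<forall>i j. B'' i j = B'' j i" unfolding B''_def using Bs by auto
    have old: "B'' (q a) j = B' (q a) j" if a: "a < k" for a j
    proof -
      have qa: "q a \<noteq> v" using qeq[of a k] a kN unfolding v_def by auto
      have "q a \<in> P" unfolding P_def using a by auto
      hence "q a \<notin> S" using PS by auto
      hence "row (q a) = B' v (q a)" unfolding row_def using \<open>q a \<in> P\<close> by simp
      thus ?thesis unfolding B''_def using qa Bs by auto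
    qed
    have rowsum: "(\<Sum>j<N. row j * M$$(j,\<beta>)) = R v \<beta>" if b: "\<beta> < c" for \<beta>
    proof -
      have "(\<Sum>j<N. row j * M$$(j,\<beta>)) = (\<Sum>j\<in>S. row j * M$$(j,\<beta>)) + (\<Sum>j\<in>{..<N} - S. row j * M$$(j,\<beta>))"
        using sum.subset_diff[OF SN, of "\<lambda>j. row j * M$$(j,\<beta>)"] by simp
      also have "(\<Sum>j\<in>{..<N} - S. row j * M$$(j,\<beta>)) = (\<Sum>j\<in>P. row j * M$$(j,\<beta>))"
        by (rule sum.mono_neutral_right) (use PN PS in \<open>auto simp: row_def\<close>)
      also have "(\<Sum>j\<in>S. row j * M$$(j,\<beta>)) = (\<Sum>j\<in>S. l j * M$$(j,\<beta>))"
        unfolding row_def by simp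
      also have "(\<Sum>j\<in>P. row j * M$$(j,\<beta>)) = (\<Sum>j\<in>P. B' v j * M$$(j,\<beta>))"
        unfolding row_def using PS by (intro sum.cong refl) auto
      finally show ?thesis using l b by simp
    qed
    show ?case
    proof (rule exI[of _ B''], intro conjI allI impI)
      show "B'' i j = B'' j i" for i j using B''s by blast
    next
      fix a j assume a: "a < Suc k" and j1: "j < N" and j2: "j \<noteq> q a \<and> \<not> E (q a) j"
      have j: "j < N \<and> j \<noteq> q a \<and> \<not> E (q a) j" using j1 j2 by blast
      show "B'' (q a) j = 0"
      proof (cases "a < k")
        case True thus ?thesis using old Bp j by auto
      next
        case False hence ak: "a = k" using a by simp
        have "B'' v j = row j" unfolding B''_def by simp
        moreover have "j \<notin> S"
        proof
          assume "j \<in> S"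
          hence "j \<in> Up" using j ak unfolding S_def v_def by auto
          then obtain b where "b \<in> Bu" "j = q b" unfolding Up_def by auto
          thus False using j ak unfolding Bu_def v_def by auto
        qed
        moreover have "B' v j = 0" if jP: "j \<in> P"
        proof -
          obtain b where b: "b < k" "j = q b" using jP unfolding P_def by auto
          have "\<not> E (q b) v" using Es j b qlt kN vN ak unfolding v_def by auto
          moreover have "v \<noteq> q b" using qeq[of b k] b kN unfolding v_def by auto
          ultimately have "B' (q b) v = 0" using Bp b vN by auto
          thus ?thesis using Bs b by metis
        qed
        ultimately show ?thesis using ak unfolding row_def v_def by auto
      qed
    next
      fix a \<beta> assume a: "a < Suc k" and b: "\<beta> < c"
      show "(\<Sum>j<N. B'' (q a) j * M$$(j,\<beta>)) = R (q a) \<beta>"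
      proof (cases "a < k")
        case True thus ?thesis using old[OF True] Be b by simp
      next
        case False hence ak: "a = k" using a by simp
        have "B'' v j = row j" for j unfolding B''_def by simp
        thus ?thesis using rowsum[OF b] ak unfolding v_def by simp
      qed
    qed
  qed
  define K where "K = N - c + 1"
  obtain B' where Bs: "\<forall>i j. B' i j = B' j i"
      and Bp: "\<forall>a<K. \<forall>j<N. j \<noteq> q a \<and> \<not> E (q a) j \<longrightarrow> B' (q a) j = 0"
      and Be: "\<forall>a<K. \<forall>\<beta><c. (\<Sum>j<N. B' (q a) j * M$$(j,\<beta>)) = R (q a) \<beta>"
    using inv[of K] unfolding K_def by auto
  define T where "T = q ` {K..<N}"
  define P where "P = q ` {..<K}"
  have KN: "K \<le> N" unfolding K_def using cN c2 by simp
  have PT: "P \<inter> T = {}"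
  proof (rule ccontr)
    assume "P \<inter> T \<noteq> {}"
    then obtain x where x: "x \<in> P" "x \<in> T" by blast
    from x(1) obtain a where a: "a < K" "x = q a" unfolding P_def by blast
    from x(2) obtain b where b: "b \<in> {K..<N}" "x = q b" unfolding T_def by blast
    have "q a = q b" using a(2) b(2) by simp
    moreover have "a < N" "b < N" using a(1) b(1) KN by auto
    ultimately have "a = b" by (rule qeq)
    thus False using a(1) b(1) by simp
  qed
  have PTU: "P \<union> T = {..<N}"
  proof -
    have "{..<K} \<union> {K..<N} = {..<N}" using KN by auto
    hence "P \<union> T = q ` {..<N}" unfolding P_def T_def by (metis image_Un)
    thus ?thesis using qim by simp
  qed
  have cT: "card T = c - 1"
  proof -
    have sub: "{K..<N} \<subseteq> {..<N}" by auto
    have "card T = card {K..<N}" unfolding T_def by (rule card_image[OF inj_on_subset[OF qinj sub]])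
    thus ?thesis unfolding K_def using cN c2 by simp
  qed
  have fP: "finite P" and fT: "finite T" unfolding P_def T_def by auto
  have TN: "T \<subseteq> {..<N}" using PTU by auto
  define Q where "Q i \<beta> = R i \<beta> - (\<Sum>j\<in>P. B' i j * M$$(j,\<beta>))" for i \<beta>
  have symQ: "(\<Sum>t\<in>T. M$$(t,\<alpha>) * Q t \<beta>) = (\<Sum>t\<in>T. M$$(t,\<beta>) * Q t \<alpha>)" if "\<alpha> < c" "\<beta> < c" for \<alpha> \<beta>
  proof -
    let ?m = "\<lambda>j \<gamma>. M$$(j,\<gamma>)"
    have "(\<Sum>t\<in>T. ?m t \<alpha> * (R t \<beta> - (\<Sum>j\<in>P. B' t j * ?m j \<beta>)))
       = (\<Sum>t\<in>T. ?m t \<beta> * (R t \<alpha> - (\<Sum>j\<in>P. B' t j * ?m j \<alpha>)))"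
    proof (rule symQ_lemma[OF fP fT PT, where B=B' and B0=B0 and R=R and m="\<lambda>j \<gamma>. M$$(j,\<gamma>)"])
      show "\<forall>i\<in>P \<union> T. \<forall>j\<in>P \<union> T. B' i j = B' j i" using Bs by auto
      show "\<forall>i\<in>P \<union> T. \<forall>j\<in>P \<union> T. B0 i j = B0 j i" using B0s PTU by auto
      show "R i \<gamma> = (\<Sum>j\<in>P \<union> T. B0 i j * M$$(j,\<gamma>))" if "i \<in> P \<union> T" "\<gamma> \<in> {\<alpha>,\<beta>}" for i \<gamma>
        using R that PTU \<open>\<alpha> < c\<close> \<open>\<beta> < c\<close> by auto
      show "R i \<gamma> = (\<Sum>j\<in>P \<union> T. B' i j * M$$(j,\<gamma>))" if i: "i \<in> P" and g: "\<gamma> \<in> {\<alpha>,\<beta>}" for i \<gamma>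
      proof -
        obtain a where a: "a < K" "i = q a" using i unfolding P_def by auto
        have "\<gamma> < c" using g \<open>\<alpha> < c\<close> \<open>\<beta> < c\<close> by auto
        thus ?thesis using Be a PTU by auto
      qed
    qed
    thus ?thesis unfolding Q_def .
  qed
  have TM: "T \<subseteq> {..<dim_row M}" using TN dM by simp
  have dT: "det (submatrix M T {..<c-1}) \<noteq> 0" using nons TN cT c2 by auto
  obtain St where Sts: "\<forall>i j. St i j = St j i"
    and Ste: "\<forall>t\<in>T. \<forall>\<beta><c. (\<Sum>s\<in>T. St t s * M$$(s,\<beta>)) = Q t \<beta>"
    using tail_solve[OF TM _ _ cT dT symQ] dM c2 by auto
  define B3 where "B3 i j = (if i \<in> T \<and> j \<in> T then St i j else B' i j)" for i j
  have Tall: "E i j" if tij: "i \<in> T" "j \<in> T" "i \<noteq> j" for i j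
  proof -
    obtain a where a: "a \<in> {K..<N}" "i = q a" using tij(1) unfolding T_def by blast
    obtain b where b: "b \<in> {K..<N}" "j = q b" using tij(2) unfolding T_def by blast
    note ab = a(1) b(1) a(2) b(2)
    have "a \<noteq> b" using ab tij by auto
    hence "a < b \<or> b < a" by auto
    moreover have "N - c < a" "N - c < b" using ab unfolding K_def by auto
    ultimately show ?thesis using H2 ab Es qlt by auto
  qed
  have Pq: "\<exists>a<K. i = q a" if "i \<in> P" for i using that unfolding P_def by auto
  show ?thesis
  proof (rule exI[of _ B3], intro conjI allI impI)
    show "B3 i j = B3 j i" for i j unfolding B3_def using Sts Bs by auto
  next
    fix i j assume ij: "i < N" "j < N" "i \<noteq> j \<and> \<not> E i j"
    show "B3 i j = 0"
    proof (cases "i \<in> T \<and> j \<in> T")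
      case True thus ?thesis using Tall ij by auto
    next
      case False
      hence "i \<in> P \<or> j \<in> P" using ij PTU by auto
      thus ?thesis
      proof
        assume "i \<in> P"
        then obtain a where a: "a < K" "i = q a" using Pq by auto
        thus ?thesis using Bp ij False unfolding B3_def by auto
      next
        assume "j \<in> P"
        then obtain b where b: "b < K" "j = q b" using Pq by auto
        have "\<not> E j i" using Es ij by auto
        hence "B' j i = 0" using Bp b ij by auto
        thus ?thesis using False Bs unfolding B3_def by metis
      qed
    qed
  next
    fix i \<beta> assume i: "i < N" and b: "\<beta> < c"
    show "(\<Sum>j<N. B3 i j * M$$(j,\<beta>)) = R i \<beta>"
    proof (cases "i \<in> T")
      case False
      hence "i \<in> P" using i PTU by auto
      then obtain a where a: "a < K" "i = q a" using Pq by auto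
      have "B3 i j = B' i j" for j unfolding B3_def using False by auto
      thus ?thesis using Be a b by simp
    next
      case True
      have "(\<Sum>j<N. B3 i j * M$$(j,\<beta>)) = (\<Sum>j\<in>P. B3 i j * M$$(j,\<beta>)) + (\<Sum>j\<in>T. B3 i j * M$$(j,\<beta>))"
        unfolding PTU[symmetric] by (rule sum.union_disjoint[OF fP fT PT])
      also have "(\<Sum>j\<in>P. B3 i j * M$$(j,\<beta>)) = (\<Sum>j\<in>P. B' i j * M$$(j,\<beta>))"
        unfolding B3_def using PT by (intro sum.cong refl) auto
      also have "(\<Sum>j\<in>T. B3 i j * M$$(j,\<beta>)) = (\<Sum>j\<in>T. St i j * M$$(j,\<beta>))"
        unfolding B3_def using True by (intro sum.cong refl) auto
      also have "\<dots> = Q i \<beta>" using Ste True b by auto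
      finally show ?thesis unfolding Q_def by simp
    qed
  qed
qed

lemma adj_dims: "dim_row (mat_adjoint A) = dim_col A" "dim_col (mat_adjoint A) = dim_row A"
  unfolding mat_adjoint_def by auto

lemma adj_index: "i < dim_col A \<Longrightarrow> j < dim_row A \<Longrightarrow> mat_adjoint A $$ (i,j) = cnj (A $$ (j,i))"
  unfolding mat_adjoint_def by (simp add: mat_of_rows_index)

lemma mult_entry:
  assumes "A \<in> carrier_mat a b" "C \<in> carrier_mat b d" "i < a" "j < d"
  shows "(A * C) $$ (i,j) = (\<Sum>k<b. A $$ (i,k) * C $$ (k,j))"
proof -
  have "(A * C) $$ (i,j) = row A i \<bullet> col C j" using assms by simp
  also have "\<dots> = (\<Sum>k<b. A $$ (i,k) * C $$ (k,j))"
    unfolding scalar_prod_def using assms by (auto simp: atLeast0LessThan intro!: sum.cong)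
  finally show ?thesis .
qed

lemma inj_lemma:
  fixes B :: "nat \<Rightarrow> nat \<Rightarrow> real" and Z :: real and v :: "nat \<Rightarrow> complex"
  assumes sym: "\<forall>i<n. \<forall>j<n. B i j = B j i"
    and eq: "\<forall>i<n. v i - (\<i> * complex_of_real Z) * (\<Sum>j<n. complex_of_real (B i j) * v j) = 0"
  shows "\<forall>i<n. v i = 0"
proof -
  define s where "s = (\<Sum>i<n. \<Sum>j<n. cnj (v i) * complex_of_real (B i j) * v j)"
  have "cnj s = (\<Sum>i<n. \<Sum>j<n. v i * complex_of_real (B i j) * cnj (v j))"
    unfolding s_def by (simp add: cnj_sum)
  also have "\<dots> = (\<Sum>j<n. \<Sum>i<n. v i * complex_of_real (B i j) * cnj (v j))" by (rule sum.swap)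
  also have "\<dots> = s" unfolding s_def
  proof (intro sum.cong refl)
    fix j i assume "j \<in> {..<n}" "i \<in> {..<n}"
    hence "B i j = B j i" using sym by auto
    thus "v i * complex_of_real (B i j) * cnj (v j) = cnj (v j) * complex_of_real (B j i) * v i"
      by (simp add: mult_ac)
  qed
  finally have cs: "cnj s = s" .
  hence "Im (cnj s) = Im s" by simp
  hence Ims: "Im s = 0" by simp
  have e0: "(\<Sum>i<n. cnj (v i) * (v i - (\<i> * complex_of_real Z) * (\<Sum>j<n. complex_of_real (B i j) * v j))) = 0"
  proof (rule sum.neutral, rule ballI)
    fix i assume "i \<in> {..<n}"
    hence "v i - (\<i> * complex_of_real Z) * (\<Sum>j<n. complex_of_real (B i j) * v j) = 0" using eq by blast
    thus "cnj (v i) * (v i - (\<i> * complex_of_real Z) * (\<Sum>j<n. complex_of_real (B i j) * v j)) = 0" by simp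
  qed
  have ei: "cnj (v i) * (v i - (\<i> * complex_of_real Z) * (\<Sum>j<n. complex_of_real (B i j) * v j))
     = cnj (v i) * v i - (\<i> * complex_of_real Z) * (\<Sum>j<n. cnj (v i) * complex_of_real (B i j) * v j)" for i
  proof -
    have "cnj (v i) * (\<Sum>j<n. complex_of_real (B i j) * v j) = (\<Sum>j<n. cnj (v i) * complex_of_real (B i j) * v j)"
      by (simp add: sum_distrib_left mult.assoc)
    thus ?thesis by (simp add: right_diff_distrib mult.left_commute)
  qed
  have "(\<Sum>i<n. cnj (v i) * v i - (\<i> * complex_of_real Z) * (\<Sum>j<n. cnj (v i) * complex_of_real (B i j) * v j)) = 0"
    using e0 unfolding ei .
  hence "(\<Sum>i<n. cnj (v i) * v i) - (\<i> * complex_of_real Z) * s = 0"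
    unfolding s_def sum_subtractf sum_distrib_left .
  hence "Re ((\<Sum>i<n. cnj (v i) * v i) - (\<i> * complex_of_real Z) * s) = 0" by simp
  moreover have rx: "Re (cnj x * x) = (cmod x)\<^sup>2" for x by (subst cmod_power2) (simp add: power2_eq_square)
  have r1: "Re (\<Sum>i<n. cnj (v i) * v i) = (\<Sum>i<n. (cmod (v i))\<^sup>2)"
    unfolding Re_sum rx ..
  have r2: "Re ((\<i> * complex_of_real Z) * s) = 0" using Ims by simp
  ultimately have "(\<Sum>i<n. (cmod (v i))\<^sup>2) = 0" using r1 r2 Ims by simp
  hence "\<forall>i\<in>{..<n}. (cmod (v i))\<^sup>2 = 0" by (subst sum_nonneg_eq_0_iff[symmetric]) auto
  thus ?thesis by auto
qed

lemma adj_carrier: "A \<in> carrier_mat a b \<Longrightarrow> mat_adjoint A \<in> carrier_mat b a"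
  unfolding carrier_mat_def using adj_dims by auto

lemma adj_mult:
  fixes A C :: "complex mat"
  assumes A: "A \<in> carrier_mat a b" and C: "C \<in> carrier_mat b d"
  shows "mat_adjoint (A * C) = mat_adjoint C * mat_adjoint A"
proof (rule eq_matI)
  have AC: "A * C \<in> carrier_mat a d" using A C by (rule mult_carrier_mat)
  have aC: "mat_adjoint C \<in> carrier_mat d b" using C by (rule adj_carrier)
  have aA: "mat_adjoint A \<in> carrier_mat b a" using A by (rule adj_carrier)
  show "dim_row (mat_adjoint (A * C)) = dim_row (mat_adjoint C * mat_adjoint A)"
    using AC aC by (simp add: adj_dims)
  show "dim_col (mat_adjoint (A * C)) = dim_col (mat_adjoint C * mat_adjoint A)"
    using AC aA by (simp add: adj_dims)
  fix i j assume "i < dim_row (mat_adjoint C * mat_adjoint A)" "j < dim_col (mat_adjoint C * mat_adjoint A)"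
  hence i: "i < d" and j: "j < a" using aC aA by auto
  have "mat_adjoint (A * C) $$ (i, j) = cnj ((A * C) $$ (j, i))"
    using AC i j by (intro adj_index) auto
  also have "\<dots> = cnj (\<Sum>k<b. A $$ (j,k) * C $$ (k,i))" using mult_entry[OF A C j i] by simp
  also have "\<dots> = (\<Sum>k<b. mat_adjoint C $$ (i,k) * mat_adjoint A $$ (k,j))"
    unfolding cnj_sum
  proof (rule sum.cong[OF refl])
    fix k assume "k \<in> {..<b}"
    hence k: "k < b" by simp
    have "mat_adjoint C $$ (i,k) = cnj (C $$ (k,i))" using C i k by (intro adj_index) auto
    moreover have "mat_adjoint A $$ (k,j) = cnj (A $$ (j,k))" using A j k by (intro adj_index) auto
    ultimately show "cnj (A $$ (j, k) * C $$ (k, i)) = mat_adjoint C $$ (i, k) * mat_adjoint A $$ (k, j)"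
      by (simp add: mult.commute)
  qed
  also have "\<dots> = (mat_adjoint C * mat_adjoint A) $$ (i,j)" using mult_entry[OF aC aA i j] by simp
  finally show "mat_adjoint (A * C) $$ (i, j) = (mat_adjoint C * mat_adjoint A) $$ (i, j)" .
qed

definition rel :: "real mat \<Rightarrow> real \<Rightarrow> complex mat \<Rightarrow> complex mat \<Rightarrow> bool" where
  "rel B Z H W \<longleftrightarrow> (\<forall>i<dim_row W. \<forall>s<dim_col W. W$$(i,s) - H$$(i,s) =
     (\<Sum>k<dim_row W. complex_of_real (B$$(i,k)) * ((\<i> * complex_of_real Z) * (H$$(k,s) + W$$(k,s)))))"

lemma rel_unique:
  assumes B: "B \<in> carrier_mat n n" and sym: "B = transpose_mat B"
    and W1: "W1 \<in> carrier_mat n m" and W2: "W2 \<in> carrier_mat n m"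
    and r1: "rel B Z H W1" and r2: "rel B Z H W2"
  shows "W1 = W2"
proof (rule eq_matI)
  show "dim_row W1 = dim_row W2" "dim_col W1 = dim_col W2" using W1 W2 by auto
  fix i s assume i: "i < dim_row W2" and s: "s < dim_col W2"
  hence i': "i < n" and s': "s < m" using W2 by auto
  define v where "v k = W1 $$ (k,s) - W2 $$ (k,s)" for k
  have symf: "\<forall>i<n. \<forall>j<n. B $$ (i,j) = B $$ (j,i)"
  proof (intro allI impI)
    fix i j assume "i < n" "j < n"
    hence "transpose_mat B $$ (i,j) = B $$ (j,i)" using B by simp
    thus "B $$ (i,j) = B $$ (j,i)" using sym by simp
  qed
  have "\<forall>i<n. v i - (\<i> * complex_of_real Z) * (\<Sum>j<n. complex_of_real (B $$ (i,j)) * v j) = 0"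
  proof (intro allI impI)
    fix i assume i: "i < n"
    have e1: "W1$$(i,s) - H$$(i,s) = (\<Sum>k<n. complex_of_real (B$$(i,k)) * ((\<i> * complex_of_real Z) * (H$$(k,s) + W1$$(k,s))))"
      using r1 W1 i s' unfolding rel_def by auto
    have e2: "W2$$(i,s) - H$$(i,s) = (\<Sum>k<n. complex_of_real (B$$(i,k)) * ((\<i> * complex_of_real Z) * (H$$(k,s) + W2$$(k,s))))"
      using r2 W2 i s' unfolding rel_def by auto
    have "v i = (\<Sum>k<n. complex_of_real (B$$(i,k)) * ((\<i> * complex_of_real Z) * (H$$(k,s) + W1$$(k,s))))
              - (\<Sum>k<n. complex_of_real (B$$(i,k)) * ((\<i> * complex_of_real Z) * (H$$(k,s) + W2$$(k,s))))"
      unfolding v_def using e1 e2 by (simp add: algebra_simps)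
    also have "\<dots> = (\<Sum>k<n. complex_of_real (B$$(i,k)) * ((\<i> * complex_of_real Z) * (H$$(k,s) + W1$$(k,s)))
              - complex_of_real (B$$(i,k)) * ((\<i> * complex_of_real Z) * (H$$(k,s) + W2$$(k,s))))"
      by (rule sum_subtractf[symmetric])
    also have "\<dots> = (\<Sum>k<n. (\<i> * complex_of_real Z) * (complex_of_real (B$$(i,k)) * v k))"
      unfolding v_def by (intro sum.cong refl) (simp add: algebra_simps)
    also have "\<dots> = (\<i> * complex_of_real Z) * (\<Sum>k<n. complex_of_real (B$$(i,k)) * v k)"
      by (rule sum_distrib_left[symmetric])
    finally show "v i - (\<i> * complex_of_real Z) * (\<Sum>j<n. complex_of_real (B $$ (i,j)) * v j) = 0" by simp
  qed
  from inj_lemma[of n "\<lambda>i j. B $$ (i,j)", OF symf this] i'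
  have "v i = 0" by blast
  thus "W1 $$ (i, s) = W2 $$ (i, s)" unfolding v_def by simp
qed

lemma theta_rel:
  fixes B :: "real mat" and Hr :: "complex mat" and Z :: real
  assumes B: "B \<in> carrier_mat n n" and sym: "B = transpose_mat B" and Hr: "Hr \<in> carrier_mat m n"
  shows "mat_adjoint (Hr * theta Z B) \<in> carrier_mat n m \<and> rel B Z (mat_adjoint Hr) (mat_adjoint (Hr * theta Z B))"
proof -
  define z where "z = \<i> * complex_of_real Z"
  define Bc where "Bc = map_mat complex_of_real B"
  define C where "C = z \<cdot>\<^sub>m Bc"
  define Xp where "Xp = 1\<^sub>m n + C"
  define Xm where "Xm = 1\<^sub>m n - C"
  have Bc: "Bc \<in> carrier_mat n n" unfolding Bc_def using B by simp
  have Cc: "C \<in> carrier_mat n n" unfolding C_def using Bc by simp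
  have Xp: "Xp \<in> carrier_mat n n" unfolding Xp_def using Cc by simp
  have Xm: "Xm \<in> carrier_mat n n" unfolding Xm_def using Cc by (rule minus_carrier_mat)
  have symf: "\<forall>i<n. \<forall>j<n. B $$ (i,j) = B $$ (j,i)"
  proof (intro allI impI)
    fix i j assume "i < n" "j < n"
    hence "transpose_mat B $$ (i,j) = B $$ (j,i)" using B by simp
    thus "B $$ (i,j) = B $$ (j,i)" using sym by simp
  qed
  have Cij: "C $$ (i,j) = z * complex_of_real (B $$ (i,j))" if "i < n" "j < n" for i j
    unfolding C_def Bc_def using that B by simp
  have Xpij: "Xp $$ (i,j) = (if i = j then 1 else 0) + z * complex_of_real (B $$ (i,j))" if "i < n" "j < n" for i j
    unfolding Xp_def using that Cc Cij by simp
  have Xmij: "Xm $$ (i,j) = (if i = j then 1 else 0) - z * complex_of_real (B $$ (i,j))" if "i < n" "j < n" for i j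
    unfolding Xm_def using that Cc Cij by simp
  have th: "theta Z B = the (mat_inverse Xp) * Xm"
    unfolding theta_def Let_def Xp_def Xm_def C_def Bc_def z_def using B by simp
  have dXp: "det Xp \<noteq> 0"
  proof
    assume "det Xp = 0"
    then obtain v where v: "v \<in> carrier_vec n" "v \<noteq> 0\<^sub>v n" "Xp *\<^sub>v v = 0\<^sub>v n"
      using det_0_iff_vec_prod_zero_field[OF Xp] by blast
    have "\<forall>i<n. v $ i - (\<i> * complex_of_real (-Z)) * (\<Sum>j<n. complex_of_real (B $$ (i,j)) * v $ j) = 0"
    proof (intro allI impI)
      fix i assume i: "i < n"
      have "(Xp *\<^sub>v v) $ i = row Xp i \<bullet> v" using Xp i by simp
      also have "\<dots> = (\<Sum>j<n. Xp $$ (i,j) * v $ j)"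
        unfolding scalar_prod_def using Xp i v by (auto simp: atLeast0LessThan intro!: sum.cong)
      also have "\<dots> = (\<Sum>j<n. (if i = j then v $ j else 0) + z * (complex_of_real (B $$ (i,j)) * v $ j))"
        using Xpij i by (intro sum.cong refl) (auto simp: algebra_simps)
      also have "\<dots> = v $ i + z * (\<Sum>j<n. complex_of_real (B $$ (i,j)) * v $ j)"
        using i by (simp add: sum.distrib sum_distrib_left)
      finally have "(Xp *\<^sub>v v) $ i = v $ i + z * (\<Sum>j<n. complex_of_real (B $$ (i,j)) * v $ j)" .
      moreover have "(Xp *\<^sub>v v) $ i = 0" using v(3) i by simp
      ultimately show "v $ i - (\<i> * complex_of_real (-Z)) * (\<Sum>j<n. complex_of_real (B $$ (i,j)) * v $ j) = 0"
        unfolding z_def by simp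
    qed
    from inj_lemma[of n "\<lambda>i j. B $$ (i,j)", OF symf this]
    have "\<forall>i<n. v $ i = 0" .
    hence "v = 0\<^sub>v n" using v(1) by (intro eq_vecI) auto
    thus False using v(2) by simp
  qed
  obtain Xi where Xi: "Xp * Xi = 1\<^sub>m n" "Xi * Xp = 1\<^sub>m n" "Xi \<in> carrier_mat n n"
    and mi: "mat_inverse Xp = Some Xi"
  proof (cases "mat_inverse Xp")
    case None
    hence "Xp \<notin> Units (ring_mat TYPE(complex) n ())" using mat_inverse(1)[OF Xp, where b="()"] by blast
    thus ?thesis using det_non_zero_imp_unit[OF Xp dXp, where b="()"] by blast
  next
    case (Some Xi)
    thus ?thesis using mat_inverse(2)[OF Xp Some] that by blast
  qed
  define \<Theta> where "\<Theta> = Xi * Xm"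
  have thT: "theta Z B = \<Theta>" unfolding th mi \<Theta>_def by simp
  have Tc: "\<Theta> \<in> carrier_mat n n" unfolding \<Theta>_def using Xi(3) Xm by simp
  have CC: "C * C \<in> carrier_mat n n" using Cc by simp
  have comm: "Xm * Xp = Xp * Xm"
  proof -
    have "Xm * Xp = Xm * 1\<^sub>m n + Xm * C" unfolding Xp_def by (rule mult_add_distrib_mat[OF Xm one_carrier_mat Cc])
    also have "Xm * 1\<^sub>m n = Xm" using Xm by (rule right_mult_one_mat)
    also have "Xm * C = 1\<^sub>m n * C - C * C" unfolding Xm_def by (rule minus_mult_distrib_mat[OF one_carrier_mat Cc Cc])
    also have "1\<^sub>m n * C = C" using Cc by (rule left_mult_one_mat)
    finally have e1: "Xm * Xp = Xm + (C - C * C)" .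
    have "Xp * Xm = Xp * 1\<^sub>m n - Xp * C" unfolding Xm_def by (rule mult_minus_distrib_mat[OF Xp one_carrier_mat Cc])
    also have "Xp * 1\<^sub>m n = Xp" using Xp by (rule right_mult_one_mat)
    also have "Xp * C = 1\<^sub>m n * C + C * C" unfolding Xp_def by (rule add_mult_distrib_mat[OF one_carrier_mat Cc Cc])
    also have "1\<^sub>m n * C = C" using Cc by (rule left_mult_one_mat)
    finally have e2: "Xp * Xm = Xp - (C + C * C)" .
    have "Xm + (C - C * C) = Xp - (C + C * C)" unfolding Xp_def Xm_def
      by (rule eq_matI) (use Cc CC in auto)
    thus ?thesis unfolding e1 e2 .
  qed
  have TXp: "\<Theta> * Xp = Xm"
  proof -
    have "\<Theta> * Xp = Xi * (Xm * Xp)" unfolding \<Theta>_def using Xi(3) Xm Xp by (rule assoc_mult_mat)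
    also have "\<dots> = Xi * (Xp * Xm)" unfolding comm ..
    also have "\<dots> = (Xi * Xp) * Xm" using Xi(3) Xp Xm by (rule assoc_mult_mat[symmetric])
    also have "\<dots> = Xm" unfolding Xi(2) using Xm by (rule left_mult_one_mat)
    finally show ?thesis .
  qed
  have adjXp: "mat_adjoint Xp = Xm"
  proof (rule eq_matI)
    show "dim_row (mat_adjoint Xp) = dim_row Xm" "dim_col (mat_adjoint Xp) = dim_col Xm"
      using Xp Xm by (auto simp: adj_dims)
    fix i j assume "i < dim_row Xm" "j < dim_col Xm"
    hence i: "i < n" and j: "j < n" using Xm by auto
    have "mat_adjoint Xp $$ (i,j) = cnj (Xp $$ (j,i))" using Xp i j by (intro adj_index) auto
    also have "\<dots> = Xm $$ (i,j)" using Xpij[OF j i] Xmij[OF i j] symf i j unfolding z_def by auto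
    finally show "mat_adjoint Xp $$ (i,j) = Xm $$ (i,j)" .
  qed
  have adjXm: "mat_adjoint Xm = Xp"
  proof (rule eq_matI)
    show "dim_row (mat_adjoint Xm) = dim_row Xp" "dim_col (mat_adjoint Xm) = dim_col Xp"
      using Xp Xm by (auto simp: adj_dims)
    fix i j assume "i < dim_row Xp" "j < dim_col Xp"
    hence i: "i < n" and j: "j < n" using Xp by auto
    have "mat_adjoint Xm $$ (i,j) = cnj (Xm $$ (j,i))" using Xm i j by (intro adj_index) auto
    also have "\<dots> = Xp $$ (i,j)" using Xmij[OF j i] Xpij[OF i j] symf i j unfolding z_def by auto
    finally show "mat_adjoint Xm $$ (i,j) = Xp $$ (i,j)" .
  qed
  have aT: "mat_adjoint \<Theta> \<in> carrier_mat n n" using Tc by (rule adj_carrier)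
  have XmaT: "Xm * mat_adjoint \<Theta> = Xp"
  proof -
    have "mat_adjoint (\<Theta> * Xp) = mat_adjoint Xp * mat_adjoint \<Theta>" by (rule adj_mult[OF Tc Xp])
    thus ?thesis unfolding TXp adjXp adjXm by simp
  qed
  define H where "H = mat_adjoint Hr"
  define W where "W = mat_adjoint (Hr * \<Theta>)"
  have Hc: "H \<in> carrier_mat n m" unfolding H_def using Hr by (rule adj_carrier)
  have Wdef: "W = mat_adjoint \<Theta> * H" unfolding W_def H_def by (rule adj_mult[OF Hr Tc])
  have Wc: "W \<in> carrier_mat n m" unfolding Wdef using aT Hc by simp
  have XmW: "Xm * W = Xp * H"
    unfolding Wdef using assoc_mult_mat[OF Xm aT Hc] XmaT by simp
  have CW: "C * W \<in> carrier_mat n m" and CH: "C * H \<in> carrier_mat n m" using Cc Wc Hc by auto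
  have e1: "Xm * W = W - C * W"
  proof -
    have "Xm * W = 1\<^sub>m n * W - C * W" unfolding Xm_def by (rule minus_mult_distrib_mat[OF one_carrier_mat Cc Wc])
    thus ?thesis using left_mult_one_mat[OF Wc] by simp
  qed
  have e2: "Xp * H = H + C * H"
  proof -
    have "Xp * H = 1\<^sub>m n * H + C * H" unfolding Xp_def by (rule add_mult_distrib_mat[OF one_carrier_mat Cc Hc])
    thus ?thesis using left_mult_one_mat[OF Hc] by simp
  qed
  have relW: "rel B Z H W"
    unfolding rel_def
  proof (intro allI impI)
    fix i s assume "i < dim_row W" "s < dim_col W"
    hence i: "i < n" and s: "s < m" using Wc by auto
    have "(W - C * W) $$ (i,s) = (H + C * H) $$ (i,s)" using XmW e1 e2 by simp
    moreover have "(W - C * W) $$ (i,s) = W $$ (i,s) - (C * W) $$ (i,s)"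
      using i s CW by (intro index_minus_mat(1)) auto
    moreover have "(H + C * H) $$ (i,s) = H $$ (i,s) + (C * H) $$ (i,s)"
      using i s CH by (intro index_add_mat(1)) auto
    ultimately have eq: "W $$ (i,s) - (C * W) $$ (i,s) = H $$ (i,s) + (C * H) $$ (i,s)" by simp
    have cw: "(C * W) $$ (i,s) = (\<Sum>k<n. z * complex_of_real (B $$ (i,k)) * W $$ (k,s))"
      using mult_entry[OF Cc Wc i s] Cij i by simp
    have ch: "(C * H) $$ (i,s) = (\<Sum>k<n. z * complex_of_real (B $$ (i,k)) * H $$ (k,s))"
      using mult_entry[OF Cc Hc i s] Cij i by simp
    have "W $$ (i,s) - H $$ (i,s) = (\<Sum>k<n. z * complex_of_real (B $$ (i,k)) * W $$ (k,s))
                + (\<Sum>k<n. z * complex_of_real (B $$ (i,k)) * H $$ (k,s))"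
      using eq unfolding cw ch by (simp add: algebra_simps)
    also have "\<dots> = (\<Sum>k<n. complex_of_real (B $$ (i,k)) * (z * (H $$ (k,s) + W $$ (k,s))))"
      unfolding sum.distrib[symmetric] by (intro sum.cong refl) (simp add: algebra_simps)
    finally show "W $$ (i,s) - H $$ (i,s) = (\<Sum>k<dim_row W. complex_of_real (B $$ (i,k)) *
        ((\<i> * complex_of_real Z) * (H $$ (k,s) + W $$ (k,s))))"
      using Wc unfolding z_def by simp
  qed
  show ?thesis using Wc relW unfolding W_def H_def thT by simp
qed

definition R_U :: "complex mat \<Rightarrow> complex mat \<Rightarrow> nat \<Rightarrow> nat \<Rightarrow> real" where
  "R_U Hr U i \<beta> = (if \<beta> < dim_row Hr then Re (U$$(i,\<beta>) - mat_adjoint Hr $$ (i,\<beta>))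
       else Im (U$$(i,\<beta> - dim_row Hr) - mat_adjoint Hr $$ (i,\<beta> - dim_row Hr)))"

lemma rel_real:
  fixes Hr U :: "complex mat" and B :: "real mat"
  assumes Hr: "Hr \<in> carrier_mat Nt NI" and U: "U \<in> carrier_mat NI Nt"
  shows "rel B Z (mat_adjoint Hr) U \<longleftrightarrow>
    (\<forall>i<NI. \<forall>\<beta><2*Nt. R_U Hr U i \<beta> = (\<Sum>j<NI. B$$(i,j) * M_U Hr Z U $$ (j,\<beta>)))"
proof -
  define H where "H = mat_adjoint Hr"
  have Hc: "H \<in> carrier_mat NI Nt" unfolding H_def using Hr by (rule adj_carrier)
  define X where "X = (\<i> * complex_of_real Z) \<cdot>\<^sub>m (H + U)"
  have Xij: "X $$ (k,s) = (\<i> * complex_of_real Z) * (H $$ (k,s) + U $$ (k,s))" if "k < NI" "s < Nt" for k s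
    unfolding X_def using that U Hc by simp
  have dHr: "dim_row Hr = Nt" "dim_col Hr = NI" using Hr by auto
  have Mlo: "M_U Hr Z U $$ (k,s) = Re (X $$ (k,s))" if "k < NI" "s < Nt" for k s
    unfolding M_U_def Let_def dHr X_def H_def using that by simp
  have Mhi: "M_U Hr Z U $$ (k,s + Nt) = Im (X $$ (k,s))" if "k < NI" "s < Nt" for k s
    unfolding M_U_def Let_def dHr X_def H_def using that by simp
  have Rlo: "R_U Hr U i s = Re (U$$(i,s) - H$$(i,s))" if "s < Nt" for i s
    unfolding R_U_def H_def dHr using that by simp
  have Rhi: "R_U Hr U i (s + Nt) = Im (U$$(i,s) - H$$(i,s))" for i s
    unfolding R_U_def H_def dHr by simp
  define S where "S i s = (\<Sum>k<NI. complex_of_real (B$$(i,k)) * ((\<i> * complex_of_real Z) * (H$$(k,s) + U$$(k,s))))" for i s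
  have ReS: "Re (S i s) = (\<Sum>k<NI. B$$(i,k) * M_U Hr Z U $$ (k,s))" if "s < Nt" for i s
    unfolding S_def Re_sum using Mlo Xij that by (intro sum.cong refl) simp
  have ImS: "Im (S i s) = (\<Sum>k<NI. B$$(i,k) * M_U Hr Z U $$ (k,s + Nt))" if "s < Nt" for i s
    unfolding S_def Im_sum using Mhi Xij that by (intro sum.cong refl) simp
  have relS: "rel B Z H U \<longleftrightarrow> (\<forall>i<NI. \<forall>s<Nt. U$$(i,s) - H$$(i,s) = S i s)"
    unfolding rel_def S_def using U by simp
  show ?thesis
    unfolding H_def[symmetric] relS
  proof safe
    fix i \<beta> assume h: "\<forall>i<NI. \<forall>s<Nt. U$$(i,s) - H$$(i,s) = S i s" and i: "i < NI" and b: "\<beta> < 2 * Nt"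
    show "R_U Hr U i \<beta> = (\<Sum>j<NI. B$$(i,j) * M_U Hr Z U $$ (j,\<beta>))"
    proof (cases "\<beta> < Nt")
      case True
      have "U$$(i,\<beta>) - H$$(i,\<beta>) = S i \<beta>" using h i True by blast
      hence "Re (U$$(i,\<beta>) - H$$(i,\<beta>)) = Re (S i \<beta>)" by simp
      thus ?thesis using Rlo[OF True] ReS[OF True] by simp
    next
      case False
      define s where "s = \<beta> - Nt"
      have s: "s < Nt" and bs: "\<beta> = s + Nt" using False b unfolding s_def by auto
      have "U$$(i,s) - H$$(i,s) = S i s" using h i s by blast
      hence "Im (U$$(i,s) - H$$(i,s)) = Im (S i s)" by simp
      thus ?thesis unfolding bs using Rhi ImS[OF s] by simp
    qed
  next
    fix i s assume h: "\<forall>i<NI. \<forall>\<beta><2 * Nt. R_U Hr U i \<beta> = (\<Sum>j<NI. B$$(i,j) * M_U Hr Z U $$ (j,\<beta>))"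
      and i: "i < NI" and s: "s < Nt"
    have "s < 2 * Nt" using s by simp
    hence "R_U Hr U i s = (\<Sum>j<NI. B$$(i,j) * M_U Hr Z U $$ (j,s))" using h i by blast
    hence "Re (U$$(i,s) - H$$(i,s)) = Re (S i s)" using Rlo[OF s] ReS[OF s] by simp
    moreover have "Im (U$$(i,s) - H$$(i,s)) = Im (S i s)"
    proof -
      have "s + Nt < 2 * Nt" using s by simp
      hence "R_U Hr U i (s + Nt) = (\<Sum>j<NI. B$$(i,j) * M_U Hr Z U $$ (j,s + Nt))" using h i by blast
      thus ?thesis using Rhi ImS[OF s] by simp
    qed
    ultimately show "U$$(i,s) - H$$(i,s) = S i s" by (simp add: complex_eq_iff)
  qed
qed

lemma perm_entries:
  fixes P Abar :: "real mat"
  assumes P: "perm_matrix n P" and A: "Abar \<in> carrier_mat n n"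
  obtains p where "p permutes {..<n}"
    "\<And>i j. i < n \<Longrightarrow> j < n \<Longrightarrow> (P * Abar * transpose_mat P) $$ (i,j) = Abar $$ (p i, p j)"
proof -
  obtain p where p: "p permutes {..<n}" and Pd: "P = mat n n (\<lambda>(i,j). if p i = j then 1 else 0)"
    using P unfolding perm_matrix_def by blast
  have pn: "p i < n" if "i < n" for i using permutes_in_image[OF p, of i] that by simp
  have Pc: "P \<in> carrier_mat n n" unfolding Pd by simp
  have PA: "P * Abar \<in> carrier_mat n n" using Pc A by simp
  have PTc: "transpose_mat P \<in> carrier_mat n n" using Pc by simp
  have e1: "(P * Abar) $$ (i,l) = Abar $$ (p i, l)" if "i < n" "l < n" for i l
  proof -
    have "(P * Abar) $$ (i,l) = (\<Sum>k<n. P $$ (i,k) * Abar $$ (k,l))" using mult_entry[OF Pc A that] .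
    also have "\<dots> = (\<Sum>k<n. if k = p i then Abar $$ (k,l) else 0)"
      unfolding Pd using that by (intro sum.cong refl) auto
    also have "\<dots> = Abar $$ (p i, l)" using pn[OF that(1)] by simp
    finally show ?thesis .
  qed
  have "(P * Abar * transpose_mat P) $$ (i,j) = Abar $$ (p i, p j)" if "i < n" "j < n" for i j
  proof -
    have "(P * Abar * transpose_mat P) $$ (i,j) = (\<Sum>l<n. (P * Abar) $$ (i,l) * transpose_mat P $$ (l,j))"
      using mult_entry[OF PA PTc that] .
    also have "\<dots> = (\<Sum>l<n. if l = p j then Abar $$ (p i, l) else 0)"
    proof (rule sum.cong[OF refl])
      fix l assume "l \<in> {..<n}"
      hence l: "l < n" by simp
      have "transpose_mat P $$ (l,j) = (if p j = l then 1 else 0)" unfolding Pd using l that by simp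
      thus "(P * Abar) $$ (i,l) * transpose_mat P $$ (l,j) = (if l = p j then Abar $$ (p i, l) else 0)"
        using e1[OF that(1) l] by auto
    qed
    also have "\<dots> = Abar $$ (p i, p j)" using pn[OF that(2)] by simp
    finally show ?thesis .
  qed
  thus ?thesis using that p by blast
qed

lemma sum_ind_card:
  assumes "finite S"
  shows "(\<Sum>b\<in>S. (if P b then 1 else 0 :: real)) = real (card {b\<in>S. P b})"
proof -
  have "(\<Sum>b\<in>S. (if P b then 1 else 0 :: real)) = (\<Sum>b\<in>{b\<in>S. P b}. 1)"
    using sum.inter_filter[OF assms, of "\<lambda>_. 1::real" P] by simp
  thus ?thesis by simp
qed

theorem theorem2:
  fixes NI NT :: nat and Ns :: "nat list" and Z0 :: real
    and Hd Hr G :: "complex mat" and E :: "nat \<Rightarrow> nat \<Rightarrow> bool"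
  assumes "NI \<ge> 1" and "NT \<ge> 1" and "Ns \<noteq> []" and "\<forall>k\<in>set Ns. k \<ge> 1" and "Z0 > 0"
    and "Hd \<in> carrier_mat (sum_list Ns) NT"
    and "Hr \<in> carrier_mat (sum_list Ns) NI"
    and "G \<in> carrier_mat NI NT"
    and "min (sum_list Ns) NT = sum_list Ns"
    and "simple_graph NI E"
    and "\<exists>P Abar. perm_matrix NI P \<and> Abar \<in> carrier_mat NI NI \<and>
           adj_mat NI E = P * Abar * transpose_mat P \<and>
           (\<forall>n\<in>{1..NI-1}. (\<Sum>m\<in>{n+1..NI}. Abar $$ (n-1, m-1)) =
               min (2 * L_val NI NT Ns - 1) (real NI - real n))"
  shows "U_fully Hr Z0 NI = U_graph Hr Z0 NI E \<union> N_U Hr Z0 NI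
     \<and> H_set Hd G (U_fully Hr Z0 NI) = H_set Hd G (U_graph Hr Z0 NI E) \<union> H_set Hd G (N_U Hr Z0 NI)"
proof -
  define D where "D = sum_list Ns"
  define L where "L = L_val NI NT Ns"
  have D1: "D \<ge> 1"
  proof -
    obtain x where x: "x \<in> set Ns" using assms(3) by (cases Ns) auto
    hence "x \<le> D" unfolding D_def by (rule member_le_sum_list) auto
    thus ?thesis using x assms(4) by auto
  qed
  have Hr: "Hr \<in> carrier_mat D NI" using assms(7) unfolding D_def .
  have Lv: "L = min (real D) (real NI / 2)"
    unfolding L_def L_val_def D_def using assms(9) by simp
  obtain P Abar where Pm: "perm_matrix NI P" and Ac: "Abar \<in> carrier_mat NI NI"
    and AdjE: "adj_mat NI E = P * Abar * transpose_mat P"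
    and Hsum: "\<forall>n\<in>{1..NI-1}. (\<Sum>m\<in>{n+1..NI}. Abar $$ (n-1, m-1)) = min (2 * L - 1) (real NI - real n)"
    using assms(11) unfolding L_def by blast
  obtain p where p: "p permutes {..<NI}"
    and pe: "\<And>i j. i < NI \<Longrightarrow> j < NI \<Longrightarrow> (P * Abar * transpose_mat P) $$ (i,j) = Abar $$ (p i, p j)"
    using perm_entries[OF Pm Ac] by blast
  have pb: "bij_betw p {..<NI} {..<NI}" using p by (rule permutes_imp_bij)
  define q where "q = inv_into {..<NI} p"
  have qb: "bij_betw q {..<NI} {..<NI}" unfolding q_def using pb by (rule bij_betw_inv_into)
  have pq: "p (q a) = a" if "a < NI" for a unfolding q_def using bij_betw_inv_into_right[OF pb] that by simp
  have qlt: "q a < NI" if "a < NI" for a using qb that bij_betw_apply by fastforce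
  have AbE: "Abar $$ (a,b) = (if E (q a) (q b) then 1 else 0)" if "a < NI" "b < NI" for a b
  proof -
    have "adj_mat NI E $$ (q a, q b) = (if E (q a) (q b) then 1 else 0)"
      unfolding adj_mat_def using qlt that by simp
    moreover have "adj_mat NI E $$ (q a, q b) = Abar $$ (a, b)"
      unfolding AdjE using pe[OF qlt[OF that(1)] qlt[OF that(2)]] pq that by simp
    ultimately show ?thesis by simp
  qed
  have Es: "\<forall>i<NI. \<forall>j<NI. E i j = E j i" using assms(10) unfolding simple_graph_def by blast
  have cardH: "real (card {b. a < b \<and> b < NI \<and> E (q a) (q b)}) = min (2 * L - 1) (real NI - real (a+1))"
    if a: "a + 2 \<le> NI" for a
  proof -
    have n: "a + 1 \<in> {1..NI-1}" using a by auto
    have S: "{Suc a + 1..NI} = Suc ` {Suc a..NI - 1}" using a by simp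
    have "(\<Sum>m\<in>{Suc a+1..NI}. Abar $$ (Suc a - 1, m - 1)) = (\<Sum>m\<in>Suc ` {Suc a..NI - 1}. Abar $$ (a, m - 1))"
      unfolding S by simp
    also have "\<dots> = (\<Sum>b\<in>{Suc a..NI-1}. Abar $$ (a, Suc b - 1))"
      by (subst sum.reindex) auto
    also have "\<dots> = (\<Sum>b\<in>{Suc a..NI-1}. Abar $$ (a, b))" by simp
    finally have "(\<Sum>m\<in>{Suc a+1..NI}. Abar $$ (Suc a - 1, m - 1)) = (\<Sum>b\<in>{Suc a..NI-1}. Abar $$ (a, b))" .
    also have "\<dots> = (\<Sum>b\<in>{Suc a..NI-1}. (if E (q a) (q b) then 1 else 0))"
      using AbE a by (intro sum.cong refl) auto
    also have "\<dots> = real (card {b\<in>{Suc a..NI-1}. E (q a) (q b)})" by (rule sum_ind_card) simp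
    also have "{b\<in>{Suc a..NI-1}. E (q a) (q b)} = {b. a < b \<and> b < NI \<and> E (q a) (q b)}" using a by auto
    finally have "(\<Sum>m\<in>{Suc a+1..NI}. Abar $$ (Suc a - 1, m - 1)) = real (card {b. a < b \<and> b < NI \<and> E (q a) (q b)})" .
    moreover have "(\<Sum>m\<in>{(a+1)+1..NI}. Abar $$ ((a+1) - 1, m - 1)) = min (2 * L - 1) (real NI - real (a+1))"
      using Hsum n by blast
    ultimately show ?thesis by simp
  qed
  have full: "E (q a) (q b)"
    if a: "a + 2 \<le> NI" and c: "card {b. a < b \<and> b < NI \<and> E (q a) (q b)} = NI - (a+1)" and ab: "a < b" "b < NI" for a b
  proof -
    have sub: "{b. a < b \<and> b < NI \<and> E (q a) (q b)} \<subseteq> {a<..<NI}" by auto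
    have "card {a<..<NI} = NI - Suc a" by (rule card_greaterThanLessThan)
    hence cc: "card {b. a < b \<and> b < NI \<and> E (q a) (q b)} = card {a<..<NI}" using c by simp
    have "{b. a < b \<and> b < NI \<and> E (q a) (q b)} = {a<..<NI}"
      by (rule card_subset_eq[OF finite_greaterThanLessThan sub cc])
    moreover have "b \<in> {a<..<NI}" using ab by simp
    ultimately have "b \<in> {b. a < b \<and> b < NI \<and> E (q a) (q b)}" by (simp only:)
    thus ?thesis by blast
  qed
  have sub1: "U_graph Hr Z0 NI E \<subseteq> U_fully Hr Z0 NI" unfolding U_graph_def U_fully_def by blast
  have sub2: "N_U Hr Z0 NI \<subseteq> U_fully Hr Z0 NI" unfolding N_U_def by blast
  have sub3: "U \<in> U_graph Hr Z0 NI E \<union> N_U Hr Z0 NI" if U: "U \<in> U_fully Hr Z0 NI" for U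
  proof (cases "U \<in> N_U Hr Z0 NI")
    case True thus ?thesis by simp
  next
    case notN: False
    obtain B where B: "B \<in> carrier_mat NI NI" and Bs: "B = transpose_mat B"
      and UB: "U = mat_adjoint (Hr * theta Z0 B)" using U unfolding U_fully_def by blast
    show ?thesis
    proof (cases "2 * D < NI")
      case False
      have allE: "E i j" if ij: "i < NI" "j < NI" "i \<noteq> j" for i j
      proof -
        have key: "E (q a) (q b)" if ab: "a < b" "b < NI" for a b
        proof -
          have a2: "a + 2 \<le> NI" using ab by simp
          have "L = real NI / 2" using Lv False by simp
          hence "min (2 * L - 1) (real NI - real (a+1)) = real NI - real (a+1)" by simp
          hence "card {b. a < b \<and> b < NI \<and> E (q a) (q b)} = NI - (a+1)"
            using cardH[OF a2] a2 by simp
          thus ?thesis using full[OF a2 _ ab] by simp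
        qed
        have pi: "p i < NI" "p j < NI" using ij permutes_in_image[OF p] by auto
        have qp: "q (p i) = i" "q (p j) = j" unfolding q_def using pb ij
          by (auto simp: bij_betw_inv_into_left)
        have "p i \<noteq> p j" using ij pb by (metis qp)
        hence "p i < p j \<or> p j < p i" by auto
        thus ?thesis using key pi qp Es ij by metis
      qed
      have "B \<in> B_graph NI E" unfolding B_graph_def using B allE by auto
      hence "U \<in> U_graph Hr Z0 NI E" unfolding U_graph_def using B Bs UB by blast
      thus ?thesis by simp
    next
      case True
      define c where "c = 2 * D"
      define M where "M = M_U Hr Z0 U"
      have dM: "dim_row M = NI" "dim_col M = c" unfolding M_def M_U_def c_def Let_def using Hr by auto
      have c2: "c \<ge> 2" using D1 unfolding c_def by simp
      have cN: "c < NI" using True unfolding c_def .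
      have LD: "L = real D" using Lv True by simp
      have H1: "\<forall>a. a \<le> NI - c \<longrightarrow> card {b. a < b \<and> b < NI \<and> E (q a) (q b)} = c - 1"
      proof (intro allI impI)
        fix a assume a: "a \<le> NI - c"
        have a2: "a + 2 \<le> NI" using a c2 cN by simp
        have "min (2 * L - 1) (real NI - real (a+1)) = real (c - 1)"
          using LD a cN c2 unfolding c_def by (simp add: of_nat_diff)
        thus "card {b. a < b \<and> b < NI \<and> E (q a) (q b)} = c - 1" using cardH[OF a2] by simp
      qed
      have H2: "\<forall>a b. NI - c < a \<longrightarrow> a < b \<longrightarrow> b < NI \<longrightarrow> E (q a) (q b)"
      proof (intro allI impI)
        fix a b assume a: "NI - c < a" and ab: "a < b" "b < NI"
        have a2: "a + 2 \<le> NI" using ab by simp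
        have "min (2 * L - 1) (real NI - real (a+1)) = real NI - real (a+1)"
          using LD a cN c2 unfolding c_def by (simp add: of_nat_diff)
        hence "card {b. a < b \<and> b < NI \<and> E (q a) (q b)} = NI - (a+1)"
          using cardH[OF a2] a2 by simp
        thus "E (q a) (q b)" using full[OF a2 _ ab] by simp
      qed
      have nons: "\<forall>I J. I \<subseteq> {..<NI} \<longrightarrow> J \<subseteq> {..<c} \<longrightarrow> card I = card J \<longrightarrow> 1 \<le> card I \<longrightarrow>
                 det (submatrix M I J) \<noteq> 0"
      proof (intro allI impI)
        fix I J assume I: "I \<subseteq> {..<NI}" and J: "J \<subseteq> {..<c}" and cIJ: "card I = card J" and c1: "1 \<le> card I"
        show "det (submatrix M I J) \<noteq> 0"
        proof
          assume d0: "det (submatrix M I J) = 0"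
          have dr: "dim_row Hr = D" using Hr by simp
          have "card J \<le> c" using card_mono[OF _ J] by simp
          hence "U \<in> N_U Hr Z0 NI" unfolding N_U_def using U I J cIJ c1 d0 dr
            unfolding M_def c_def by auto
          thus False using notN by simp
        qed
      qed
      define B0 where "B0 i j = B $$ (i,j)" for i j
      have B0s: "\<forall>i<NI. \<forall>j<NI. B0 i j = B0 j i"
      proof (intro allI impI)
        fix i j assume "i < NI" "j < NI"
        hence "transpose_mat B $$ (i,j) = B $$ (j,i)" using B by simp
        thus "B0 i j = B0 j i" unfolding B0_def using Bs by simp
      qed
      from theta_rel[OF B Bs Hr, of Z0] UB
      have Uc: "U \<in> carrier_mat NI D" and relU: "rel B Z0 (mat_adjoint Hr) U" by auto
      have Rr: "\<forall>i<NI. \<forall>\<beta><c. R_U Hr U i \<beta> = (\<Sum>j<NI. B0 i j * M$$(j,\<beta>))"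
        using relU rel_real[OF Hr Uc, of B Z0] unfolding B0_def M_def c_def by simp
      obtain B' where B's: "\<forall>i j. B' i j = B' j i"
        and B'p: "\<forall>i<NI. \<forall>j<NI. i \<noteq> j \<and> \<not> E i j \<longrightarrow> B' i j = 0"
        and B'e: "\<forall>i<NI. \<forall>\<beta><c. (\<Sum>j<NI. B' i j * M$$(j,\<beta>)) = R_U Hr U i \<beta>"
        using core[OF dM c2 cN qb Es H1 H2 nons B0s Rr] by blast
      define Bm where "Bm = mat NI NI (\<lambda>(i,j). B' i j)"
      have Bmc: "Bm \<in> carrier_mat NI NI" unfolding Bm_def by simp
      have Bms: "Bm = transpose_mat Bm"
        unfolding Bm_def by (rule eq_matI) (use B's in auto)
      have Bmg: "Bm \<in> B_graph NI E" unfolding B_graph_def Bm_def using B'p by auto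
      have relBm: "rel Bm Z0 (mat_adjoint Hr) U"
      proof -
        have "\<forall>i<NI. \<forall>\<beta><2*D. R_U Hr U i \<beta> = (\<Sum>j<NI. Bm$$(i,j) * M_U Hr Z0 U $$ (j,\<beta>))"
        proof (intro allI impI)
          fix i \<beta> assume i: "i < NI" and b: "\<beta> < 2*D"
          have "(\<Sum>j<NI. Bm$$(i,j) * M_U Hr Z0 U $$ (j,\<beta>)) = (\<Sum>j<NI. B' i j * M$$(j,\<beta>))"
            unfolding Bm_def M_def using i by (intro sum.cong refl) simp
          thus "R_U Hr U i \<beta> = (\<Sum>j<NI. Bm$$(i,j) * M_U Hr Z0 U $$ (j,\<beta>))"
            using B'e i b unfolding c_def by simp
        qed
        thus ?thesis using rel_real[OF Hr Uc, of Bm Z0] by simp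
      qed
      from theta_rel[OF Bmc Bms Hr, of Z0]
      have U'c: "mat_adjoint (Hr * theta Z0 Bm) \<in> carrier_mat NI D"
        and relU': "rel Bm Z0 (mat_adjoint Hr) (mat_adjoint (Hr * theta Z0 Bm))" by auto
      have "U = mat_adjoint (Hr * theta Z0 Bm)" by (rule rel_unique[OF Bmc Bms Uc U'c relBm relU'])
      hence "U \<in> U_graph Hr Z0 NI E" unfolding U_graph_def using Bmc Bms Bmg by blast
      thus ?thesis by simp
    qed
  qed
  have eq: "U_fully Hr Z0 NI = U_graph Hr Z0 NI E \<union> N_U Hr Z0 NI"
    using sub1 sub2 sub3 by blast
  show ?thesis using eq unfolding H_set_def by (simp add: image_Un)
qed

end
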